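(* Consider the constraint system obtained from (ILP-1) by replacing, in the flow constraints, the one-to-many flows indexed by $b\in\texttt{src}$ with many-to-one flows indexed by $b\in\texttt{snk}$: for all $b\in\texttt{snk}$, $s\in S$, $t$: $F^b_{st}=-\sum_{r\in\texttt{src}}z_{rs0}$ if $t=0$, $F^b_{st}=|\texttt{src}|\,z_{bsT}$ if $t=T$, and $F^b_{st}=0$ otherwise (with the bridge constraints now imposed for $b\in\texttt{snk}$). For any feasible point of this system, defining $s^r_t$ as the unique state with $z_{rs^r_tt}=1$ and $\pi^r=s^r_0\cdots s^r_T$, the $\pi^r$ are mobility paths and for every $i\in\texttt{src}$ and $j\in\texttt{snk}$ there exists an agent-to-agent information path $\bar\pi^{i,j}$ valid with respect to $\{\pi^r\}$.
   Context: A mobility-communication network is $\mathcal N=(S,\rightarrow,\rightsquigarrow)$ with $S$ finite, $\rightarrow\subseteq S\times S$ directed mobility edges, $\rightsquigarrow\subseteq S\times S$ directed communication edges; $C^\mp_\rightarrow(s)$, $C^\mp_\rightsquigarrow(s)$ denote predecessor/successor sets along the respective edges. There are $R$ agents with initial states $s^r_0$, horizon $T\ge1$, and $\texttt{src},\texttt{snk}\subseteq\{1,\dots,R\}$. A mobility path is $s_0\cdots s_T$ with $(s_t,s_{t+1})\in\rightarrow$. An information path is $\mathfrak s^0_0\cdots\mathfrak s^{n_0}_0\mathfrak s^0_1\cdots\mathfrak s^{n_T}_T$ with $(\mathfrak s^i_t,\mathfrak s^{i+1}_t)\in\rightsquigarrow$ for $i<n_t$ and $(\mathfrak s^{n_t}_t,\mathfrak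 s^0_{t+1})\in\rightarrow$ for $t<T$; an agent-to-agent information path $\bar\pi^{i,j}$ starts at $s^i_0$ and ends at $s^j_T$. It is valid w.r.t. mobility paths $\{\pi^r=s^r_0\cdots s^r_T\}$ if $\{\mathfrak s^i_t\}_{i\le n_t}\subseteq\{s^r_t\}_r$ for all $t$ and $(\mathfrak s^{n_t}_t,\mathfrak s^0_{t+1})\in\{(s^r_t,s^r_{t+1})\}_r$ for all $t<T$. Variables: binary $z_{rst}$ ($0\le t\le T$), $x_{rss't}$ ($(s,s')\in\rightarrow$, $t<T$); nonnegative integer $f^b_{ss't}$ ($(s,s')\in\rightarrow$, $t<T$), $\bar f^b_{ss't}$ ($(s,s')\in\rightsquigarrow$, $t\le T$). $F^b_{st}=\sum_{s'\in C^-_\rightarrow(s)}f^b_{s's(t-1)}+\sum_{s'\in C^-_\rightsquigarrow(s)}\bar f^b_{s'st}-\sum_{s'\in C^+_\rightarrow(s)}f^b_{ss't}-\sum_{s'\in C^+_\rightsquigarrow(s)}\bar f^b_{ss't}$ (terms with time $-1$ or mobility time $T$ omitted). With a constant $N\ge R$, the remaining constraints are: $z_{rs0}=1$ iff $s=s^r_0$; $z_{rs(t+1)}=\sum_{s'\in C^-_\rightarrow(s)}x_{rs'st}$ and $z_{rst}=\sum_{s'\in C^+_\rightarrow(s)}x_{rss't}$ for $t<T$; $\bar f^b_{ss't}\le N\sum_rz_{rst}$, $\bar f^b_{ss't}\le N\sum_rz_{rs't}$, $f^b_{ss't}\le N\sum_rx_{rss't}$ for every flow index $b$. *)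

theory Defs
  imports Main
begin

definition C_minus :: "('s \<times> 's) set \<Rightarrow> 's \<Rightarrow> 's set" where
  "C_minus E s = {s'. (s', s) \<in> E}"

definition C_plus :: "('s \<times> 's) set \<Rightarrow> 's \<Rightarrow> 's set" where
  "C_plus E s = {s'. (s, s') \<in> E}"

definition network_wf ::
  "'s set \<Rightarrow> ('s \<times> 's) set \<Rightarrow> ('s \<times> 's) set \<Rightarrow> nat \<Rightarrow> (nat \<Rightarrow> 's) \<Rightarrow> nat \<Rightarrow> nat set \<Rightarrow> nat set \<Rightarrow> bool" where
  "network_wf S mob com R s0 T src snk \<longleftrightarrow>
     finite S \<and> mob \<subseteq> S \<times> S \<and> com \<subseteq> S \<times> S \<and>
     (\<forall>r\<in>{1..R}. s0 r \<in> S) \<and> T \<ge> 1 \<and> src \<subseteq> {1..R} \<and> snk \<subseteq> {1..R}"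

text \<open>Terms with time -1 or mobility time T are omitted.\<close>
definition Fnet ::
  "('s \<times> 's) set \<Rightarrow> ('s \<times> 's) set \<Rightarrow> nat \<Rightarrow> ('s \<Rightarrow> 's \<Rightarrow> nat \<Rightarrow> int) \<Rightarrow> ('s \<Rightarrow> 's \<Rightarrow> nat \<Rightarrow> int)
     \<Rightarrow> 's \<Rightarrow> nat \<Rightarrow> int" where
  "Fnet mob com T f fb s t =
     (if t \<ge> 1 then (\<Sum>s'\<in>C_minus mob s. f s' s (t - 1)) else 0)
     + (\<Sum>s'\<in>C_minus com s. fb s' s t)
     - (if t < T then (\<Sum>s'\<in>C_plus mob s. f s s' t) else 0)
     - (\<Sum>s'\<in>C_plus com s. fb s s' t)"

definition ILP_snk_feasible ::
  "'s set \<Rightarrow> ('s \<times> 's) set \<Rightarrow> ('s \<times> 's) set \<Rightarrow> nat \<Rightarrow> (nat \<Rightarrow> 's) \<Rightarrow> nat \<Rightarrow> nat set \<Rightarrow> nat set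
   \<Rightarrow> nat
   \<Rightarrow> (nat \<Rightarrow> 's \<Rightarrow> nat \<Rightarrow> int) \<Rightarrow> (nat \<Rightarrow> 's \<Rightarrow> 's \<Rightarrow> nat \<Rightarrow> int)
   \<Rightarrow> (nat \<Rightarrow> 's \<Rightarrow> 's \<Rightarrow> nat \<Rightarrow> int) \<Rightarrow> (nat \<Rightarrow> 's \<Rightarrow> 's \<Rightarrow> nat \<Rightarrow> int) \<Rightarrow> bool" where
  "ILP_snk_feasible S mob com R s0 T src snk N z x f fb \<longleftrightarrow>
     \<comment> \<open>domains: binary z, x; nonnegative integer flows\<close>
     (\<forall>r\<in>{1..R}. \<forall>s\<in>S. \<forall>t\<le>T. z r s t \<in> {0, 1}) \<and>
     (\<forall>r\<in>{1..R}. \<forall>(s, s')\<in>mob. \<forall>t<T. x r s s' t \<in> {0, 1}) \<and>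
     (\<forall>b\<in>snk. \<forall>(s, s')\<in>mob. \<forall>t<T. f b s s' t \<ge> 0) \<and>
     (\<forall>b\<in>snk. \<forall>(s, s')\<in>com. \<forall>t\<le>T. fb b s s' t \<ge> 0) \<and>
     \<comment> \<open>initial positions\<close>
     (\<forall>r\<in>{1..R}. \<forall>s\<in>S. z r s 0 = 1 \<longleftrightarrow> s = s0 r) \<and>
     \<comment> \<open>mobility conservation\<close>
     (\<forall>r\<in>{1..R}. \<forall>s\<in>S. \<forall>t<T.
        z r s (Suc t) = (\<Sum>s'\<in>C_minus mob s. x r s' s t) \<and>
        z r s t = (\<Sum>s'\<in>C_plus mob s. x r s s' t)) \<and>
     \<comment> \<open>bridge constraints\<close>
     (\<forall>b\<in>snk. \<forall>(s, s')\<in>com. \<forall>t\<le>T.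
        fb b s s' t \<le> int N * (\<Sum>r\<in>{1..R}. z r s t) \<and>
        fb b s s' t \<le> int N * (\<Sum>r\<in>{1..R}. z r s' t)) \<and>
     (\<forall>b\<in>snk. \<forall>(s, s')\<in>mob. \<forall>t<T.
        f b s s' t \<le> int N * (\<Sum>r\<in>{1..R}. x r s s' t)) \<and>
     \<comment> \<open>many-to-one flow constraints\<close>
     (\<forall>b\<in>snk. \<forall>s\<in>S. \<forall>t\<le>T.
        Fnet mob com T (f b) (fb b) s t =
          (if t = 0 then - (\<Sum>r\<in>src. z r s 0)
           else if t = T then int (card src) * z b s T
           else 0))"

definition state_of :: "'s set \<Rightarrow> (nat \<Rightarrow> 's \<Rightarrow> nat \<Rightarrow> int) \<Rightarrow> nat \<Rightarrow> nat \<Rightarrow> 's" where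
  "state_of S z r t = (THE s. s \<in> S \<and> z r s t = 1)"

definition mobility_path :: "'s set \<Rightarrow> ('s \<times> 's) set \<Rightarrow> nat \<Rightarrow> (nat \<Rightarrow> 's) \<Rightarrow> bool" where
  "mobility_path S mob T p \<longleftrightarrow> (\<forall>t\<le>T. p t \<in> S) \<and> (\<forall>t<T. (p t, p (Suc t)) \<in> mob)"

text \<open>An information path: for each t \<le> T a nonempty block ip t = [s^0_t, ..., s^{n_t}_t]
  of communication steps, blocks joined by mobility edges.\<close>
definition info_path ::
  "'s set \<Rightarrow> ('s \<times> 's) set \<Rightarrow> ('s \<times> 's) set \<Rightarrow> nat \<Rightarrow> (nat \<Rightarrow> 's list) \<Rightarrow> bool" where
  "info_path S mob com T ip \<longleftrightarrow>
     (\<forall>t\<le>T. ip t \<noteq> [] \<and> set (ip t) \<subseteq> S \<and>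
        (\<forall>i. Suc i < length (ip t) \<longrightarrow> (ip t ! i, ip t ! Suc i) \<in> com)) \<and>
     (\<forall>t<T. (last (ip t), hd (ip (Suc t))) \<in> mob)"

definition agent_info_path ::
  "'s set \<Rightarrow> ('s \<times> 's) set \<Rightarrow> ('s \<times> 's) set \<Rightarrow> nat \<Rightarrow> (nat \<Rightarrow> nat \<Rightarrow> 's) \<Rightarrow> nat \<Rightarrow> nat
   \<Rightarrow> (nat \<Rightarrow> 's list) \<Rightarrow> bool" where
  "agent_info_path S mob com T p i j ip \<longleftrightarrow>
     info_path S mob com T ip \<and> hd (ip 0) = p i 0 \<and> last (ip T) = p j T"

definition valid_info_path :: "nat \<Rightarrow> nat \<Rightarrow> (nat \<Rightarrow> nat \<Rightarrow> 's) \<Rightarrow> (nat \<Rightarrow> 's list) \<Rightarrow> bool" where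
  "valid_info_path R T p ip \<longleftrightarrow>
     (\<forall>t\<le>T. set (ip t) \<subseteq> {p r t | r. r \<in> {1..R}}) \<and>
     (\<forall>t<T. (last (ip t), hd (ip (Suc t))) \<in> {(p r t, p r (Suc t)) | r. r \<in> {1..R}})"

end

theory Submission
  imports Defs
begin

lemma sum_edges_minus:
  assumes "finite S" "E \<subseteq> S \<times> S"
  shows "(\<Sum>s\<in>S. \<Sum>s'\<in>C_minus E s. h s' s) = (\<Sum>(u,v)\<in>E. h u v)"
proof -
  have fin: "\<forall>s\<in>S. finite (C_minus E s)"
    using assms by (auto simp: C_minus_def intro: finite_subset[of _ S])
  have "(\<Sum>s\<in>S. \<Sum>s'\<in>C_minus E s. h s' s) = (\<Sum>(s,s')\<in>Sigma S (C_minus E). h s' s)"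
    using sum.Sigma[OF assms(1) fin] by simp
  also have "Sigma S (C_minus E) = (\<lambda>(u,v). (v,u)) ` E"
    using assms(2) by (auto simp: C_minus_def image_iff)
  also have "(\<Sum>(s,s')\<in>(\<lambda>(u,v). (v,u)) ` E. h s' s) = (\<Sum>(u,v)\<in>E. h u v)"
    by (subst sum.reindex) (auto simp: inj_on_def case_prod_beta comp_def)
  finally show ?thesis .
qed

lemma sum_edges_plus:
  assumes "finite S" "E \<subseteq> S \<times> S"
  shows "(\<Sum>s\<in>S. \<Sum>s'\<in>C_plus E s. h s s') = (\<Sum>(u,v)\<in>E. h u v)"
proof -
  have fin: "\<forall>s\<in>S. finite (C_plus E s)"
    using assms by (auto simp: C_plus_def intro: finite_subset[of _ S])
  have "(\<Sum>s\<in>S. \<Sum>s'\<in>C_plus E s. h s s') = (\<Sum>(s,s')\<in>Sigma S (C_plus E). h s s')"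
    using sum.Sigma[OF assms(1) fin] by simp
  also have "Sigma S (C_plus E) = E"
    using assms(2) by (auto simp: C_plus_def)
  finally show ?thesis .
qed

lemma unique_one:
  fixes g :: "'a \<Rightarrow> int"
  assumes "finite S" "\<forall>s\<in>S. g s \<in> {0,1}" "sum g S = 1"
  shows "\<exists>!s. s \<in> S \<and> g s = 1"
proof -
  have ex: "\<exists>s\<in>S. g s = 1"
  proof (rule ccontr)
    assume "\<not> ?thesis"
    then have "\<forall>s\<in>S. g s = 0" using assms(2) by auto
    then have "sum g S = 0" by simp
    with assms(3) show False by simp
  qed
  moreover have "a = b" if "a \<in> S" "b \<in> S" "g a = 1" "g b = 1" for a b
  proof (rule ccontr)
    assume "a \<noteq> b"
    have "sum g {a,b} \<le> sum g S"
      by (rule sum_mono2) (use assms that in auto)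
    with that \<open>a \<noteq> b\<close> assms(3) show False by simp
  qed
  ultimately show ?thesis by blast
qed

lemma shift_sum:
  fixes g :: "nat \<Rightarrow> int"
  assumes "T \<ge> 1"
  shows "(\<Sum>t\<le>T. if 1 \<le> t then g (t - 1) else 0) = (\<Sum>t<T. g t)"
proof -
  obtain m where m: "T = Suc m" using assms by (cases T) auto
  show ?thesis unfolding m sum.atMost_Suc_shift by (simp add: lessThan_Suc_atMost)
qed

lemma cut_sum:
  fixes g :: "nat \<Rightarrow> int"
  shows "(\<Sum>t\<le>T. if t < T then g t else 0) = (\<Sum>t<T. g t)"
  unfolding lessThan_Suc_atMost[symmetric] by (simp add: sum.lessThan_Suc)

lemma sum_le_member:
  fixes g :: "'a \<Rightarrow> int"
  assumes "finite A" "a \<in> A" "\<forall>y\<in>A. g y \<le> 0"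
  shows "sum g A \<le> g a"
proof -
  have "sum g A = g a + sum g (A - {a})" using assms by (simp add: sum.remove)
  moreover have "sum g (A - {a}) \<le> 0" using assms by (intro sum_nonpos) auto
  ultimately show ?thesis by simp
qed

lemma pos_sum_ex:
  fixes g :: "'a \<Rightarrow> int"
  assumes "sum g A > 0"
  shows "\<exists>y\<in>A. g y > 0"
proof (rule ccontr)
  assume "\<not> ?thesis"
  then have "sum g A \<le> 0" by (intro sum_nonpos) auto
  with assms show False by simp
qed

theorem mainTheorem3:
  fixes S :: "'s set" and mob com :: "('s \<times> 's) set" and R T N :: nat
    and s0 :: "nat \<Rightarrow> 's" and src snk :: "nat set"
    and z :: "nat \<Rightarrow> 's \<Rightarrow> nat \<Rightarrow> int" and x :: "nat \<Rightarrow> 's \<Rightarrow> 's \<Rightarrow> nat \<Rightarrow> int"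
    and f fb :: "nat \<Rightarrow> 's \<Rightarrow> 's \<Rightarrow> nat \<Rightarrow> int"
  assumes "network_wf S mob com R s0 T src snk"
    and "N \<ge> R"
    and "ILP_snk_feasible S mob com R s0 T src snk N z x f fb"
  shows "(\<forall>r\<in>{1..R}. \<forall>t\<le>T. \<exists>!s. s \<in> S \<and> z r s t = 1)
    \<and> (\<forall>r\<in>{1..R}. mobility_path S mob T (state_of S z r))
    \<and> (\<forall>i\<in>src. \<forall>j\<in>snk. \<exists>ip.
          agent_info_path S mob com T (state_of S z) i j ip
          \<and> valid_info_path R T (state_of S z) ip)"
proof -
  have finS: "finite S" and mobS: "mob \<subseteq> S \<times> S" and comS: "com \<subseteq> S \<times> S"
    and s0S: "\<forall>r\<in>{1..R}. s0 r \<in> S" and T1: "T \<ge> 1" and srcR: "src \<subseteq> {1..R}"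
    and snkR: "snk \<subseteq> {1..R}"
    using assms(1) unfolding network_wf_def by auto
  have zbin: "\<forall>r\<in>{1..R}. \<forall>s\<in>S. \<forall>t\<le>T. z r s t \<in> {0, 1}"
    and xbin: "\<forall>r\<in>{1..R}. \<forall>(s, s')\<in>mob. \<forall>t<T. x r s s' t \<in> {0, 1}"
    and fnn: "\<forall>b\<in>snk. \<forall>(s, s')\<in>mob. \<forall>t<T. f b s s' t \<ge> 0"
    and fbnn: "\<forall>b\<in>snk. \<forall>(s, s')\<in>com. \<forall>t\<le>T. fb b s s' t \<ge> 0"
    and zinit: "\<forall>r\<in>{1..R}. \<forall>s\<in>S. z r s 0 = 1 \<longleftrightarrow> s = s0 r"
    and cons: "\<forall>r\<in>{1..R}. \<forall>s\<in>S. \<forall>t<T.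
        z r s (Suc t) = (\<Sum>s'\<in>C_minus mob s. x r s' s t) \<and>
        z r s t = (\<Sum>s'\<in>C_plus mob s. x r s s' t)"
    and brc: "\<forall>b\<in>snk. \<forall>(s, s')\<in>com. \<forall>t\<le>T.
        fb b s s' t \<le> int N * (\<Sum>r\<in>{1..R}. z r s t) \<and>
        fb b s s' t \<le> int N * (\<Sum>r\<in>{1..R}. z r s' t)"
    and brm: "\<forall>b\<in>snk. \<forall>(s, s')\<in>mob. \<forall>t<T.
        f b s s' t \<le> int N * (\<Sum>r\<in>{1..R}. x r s s' t)"
    and flow: "\<forall>b\<in>snk. \<forall>s\<in>S. \<forall>t\<le>T.
        Fnet mob com T (f b) (fb b) s t =
          (if t = 0 then - (\<Sum>r\<in>src. z r s 0)
           else if t = T then int (card src) * z b s T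
           else 0)"
    using assms(3) unfolding ILP_snk_feasible_def by auto
  have zb: "z r s t \<in> {0,1}" if "r \<in> {1..R}" "s \<in> S" "t \<le> T" for r s t
    using zbin that by blast
  have xb: "x r s s' t \<in> {0,1}" if "r \<in> {1..R}" "(s, s') \<in> mob" "t < T" for r s s' t
    using bspec[OF bspec[OF xbin that(1)] that(2)] that(3) by simp
  have fn: "f b s s' t \<ge> 0" if "b \<in> snk" "(s, s') \<in> mob" "t < T" for b s s' t
    using bspec[OF bspec[OF fnn that(1)] that(2)] that(3) by simp
  have fbn: "fb b s s' t \<ge> 0" if "b \<in> snk" "(s, s') \<in> com" "t \<le> T" for b s s' t
    using bspec[OF bspec[OF fbnn that(1)] that(2)] that(3) by simp
  have brc1: "fb b s s' t \<le> int N * (\<Sum>r\<in>{1..R}. z r s t)"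
    and brc2: "fb b s s' t \<le> int N * (\<Sum>r\<in>{1..R}. z r s' t)"
    if "b \<in> snk" "(s, s') \<in> com" "t \<le> T" for b s s' t
    using bspec[OF bspec[OF brc that(1)] that(2)] that(3) by simp_all
  have brm1: "f b s s' t \<le> int N * (\<Sum>r\<in>{1..R}. x r s s' t)"
    if "b \<in> snk" "(s, s') \<in> mob" "t < T" for b s s' t
    using bspec[OF bspec[OF brm that(1)] that(2)] that(3) by simp
  have finCm: "finite (C_minus E s)" if "E \<subseteq> S \<times> S" for E s
    using that finS by (auto simp: C_minus_def intro: finite_subset[of _ S])
  have finCp: "finite (C_plus E s)" if "E \<subseteq> S \<times> S" for E s
    using that finS by (auto simp: C_plus_def intro: finite_subset[of _ S])
  have sumz: "(\<Sum>s\<in>S. z r s t) = 1" if r: "r \<in> {1..R}" and "t \<le> T" for r t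
    using that(2)
  proof (induction t)
    case 0
    have "(\<Sum>s\<in>S. z r s 0) = (\<Sum>s\<in>S. if s = s0 r then 1 else 0)"
      using zinit zbin r by (intro sum.cong) force+
    also have "\<dots> = 1" using s0S r finS by (simp add: sum.delta)
    finally show ?case .
  next
    case (Suc t)
    have "(\<Sum>s\<in>S. z r s (Suc t)) = (\<Sum>s\<in>S. \<Sum>s'\<in>C_minus mob s. x r s' s t)"
      using cons r Suc.prems by (intro sum.cong) auto
    also have "\<dots> = (\<Sum>(u,v)\<in>mob. x r u v t)" by (rule sum_edges_minus[OF finS mobS])
    also have "\<dots> = (\<Sum>s\<in>S. \<Sum>s'\<in>C_plus mob s. x r s s' t)"
      by (rule sum_edges_plus[OF finS mobS, symmetric])
    also have "\<dots> = (\<Sum>s\<in>S. z r s t)"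
      using cons r Suc.prems by (intro sum.cong) auto
    finally show ?case using Suc by simp
  qed
  have uniq: "\<forall>r\<in>{1..R}. \<forall>t\<le>T. \<exists>!s. s \<in> S \<and> z r s t = 1"
  proof (intro ballI allI impI)
    fix r t assume "r \<in> {1..R}" "t \<le> T"
    then show "\<exists>!s. s \<in> S \<and> z r s t = 1"
      using unique_one[OF finS, of "\<lambda>s. z r s t"] sumz zbin by blast
  qed
  define p where "p = state_of S z"
  have pS: "p r t \<in> S \<and> z r (p r t) t = 1" if "r \<in> {1..R}" "t \<le> T" for r t
    using theI'[OF uniq[rule_format, OF that]] unfolding p_def state_of_def by simp
  have pu: "s = p r t" if "r \<in> {1..R}" "t \<le> T" "s \<in> S" "z r s t = 1" for r s t
    using the1_equality[OF uniq[rule_format, OF that(1,2)]] that unfolding p_def state_of_def by simp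
  have movestep: "s = p r t \<and> s' = p r (Suc t)"
    if r: "r \<in> {1..R}" and e: "(s, s') \<in> mob" and t: "t < T" and x1: "x r s s' t = 1" for r s s' t
  proof -
    have sS: "s \<in> S" and s'S: "s' \<in> S" using e mobS by auto
    have "x r s s' t \<le> (\<Sum>v\<in>C_plus mob s. x r s v t)"
      using e xbin r t by (intro member_le_sum finCp[OF mobS]) (force simp: C_plus_def)+
    then have "z r s t \<ge> 1" using cons r sS t x1 by auto
    moreover have "z r s t \<in> {0,1}" using zbin r sS t by simp
    ultimately have "z r s t = 1" by auto
    then have 1: "s = p r t" using pu r t sS by auto
    have "x r s s' t \<le> (\<Sum>u\<in>C_minus mob s'. x r u s' t)"
      using e xbin r t by (intro member_le_sum finCm[OF mobS]) (force simp: C_minus_def)+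
    then have "z r s' (Suc t) \<ge> 1" using cons r s'S t x1 by auto
    moreover have "z r s' (Suc t) \<in> {0,1}" using zbin r s'S t by simp
    ultimately have "z r s' (Suc t) = 1" by auto
    then have "s' = p r (Suc t)" using pu r t s'S by auto
    with 1 show ?thesis by simp
  qed
  have mp: "\<forall>r\<in>{1..R}. mobility_path S mob T (p r)"
  proof
    fix r assume r: "r \<in> {1..R}"
    have "(p r t, p r (Suc t)) \<in> mob" if t: "t < T" for t
    proof -
      have pt: "p r t \<in> S" "z r (p r t) t = 1" using pS r t by auto
      have "z r (p r t) t = (\<Sum>s'\<in>C_plus mob (p r t). x r (p r t) s' t)"
        using cons r t pt(1) by blast
      then have "(\<Sum>s'\<in>C_plus mob (p r t). x r (p r t) s' t) > 0" using pt(2) by simp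
      then obtain s' where s': "s' \<in> C_plus mob (p r t)" "x r (p r t) s' t > 0"
        using pos_sum_ex by blast
      have e: "(p r t, s') \<in> mob" using s' by (simp add: C_plus_def)
      have "x r (p r t) s' t \<in> {0,1}" using xb r e t by auto
      then have "x r (p r t) s' t = 1" using s'(2) by auto
      with movestep[OF r e t] e show ?thesis by simp
    qed
    then show "mobility_path S mob T (p r)" unfolding mobility_path_def using pS r by auto
  qed
  have part3: "\<exists>ip. agent_info_path S mob com T p i j ip \<and> valid_info_path R T p ip"
    if i: "i \<in> src" and j: "j \<in> snk" for i j
  proof -
    have iR: "i \<in> {1..R}" using i srcR by auto
    have jR: "j \<in> {1..R}" using j snkR by auto
    define P where "P = (\<lambda>t (ip :: nat \<Rightarrow> 's list).
      (\<forall>t'\<le>t. ip t' \<noteq> [] \<and> set (ip t') \<subseteq> S \<and> set (ip t') \<subseteq> {p r t' |r. r \<in> {1..R}} \<and>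
          (\<forall>k. Suc k < length (ip t') \<longrightarrow> (ip t' ! k, ip t' ! Suc k) \<in> com)) \<and>
      (\<forall>t'<t. (last (ip t'), hd (ip (Suc t'))) \<in> mob \<and>
          (last (ip t'), hd (ip (Suc t'))) \<in> {(p r t', p r (Suc t')) |r. r \<in> {1..R}}) \<and>
      hd (ip 0) = p i 0)"
    define good where "good = (\<lambda>s t. \<exists>ip. P t ip \<and> last (ip t) = s)"
    have posC: "(\<exists>r\<in>{1..R}. s = p r t) \<and> (\<exists>r\<in>{1..R}. s' = p r t)"
      if e: "(s, s') \<in> com" and t: "t \<le> T" and pos: "fb j s s' t > 0" for s s' t
    proof -
      have at: "\<exists>r\<in>{1..R}. u = p r t" if u: "u \<in> S" and le: "fb j s s' t \<le> int N * (\<Sum>r\<in>{1..R}. z r u t)" for u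
      proof -
        have "(\<Sum>r\<in>{1..R}. z r u t) > 0"
        proof (rule ccontr)
          assume "\<not> ?thesis"
          then have "int N * (\<Sum>r\<in>{1..R}. z r u t) \<le> 0" by (simp add: mult_nonneg_nonpos)
          with le pos show False by simp
        qed
        then obtain r where r: "r \<in> {1..R}" "z r u t > 0" using pos_sum_ex by blast
        have "z r u t \<in> {0,1}" using zb[OF r(1) u t] .
        then have "z r u t = 1" using r by auto
        then show ?thesis using pu r u t by blast
      qed
      show ?thesis using at[OF _ brc1[OF j e t]] at[OF _ brc2[OF j e t]] e comS by auto
    qed
    have posM: "\<exists>r\<in>{1..R}. s = p r t \<and> s' = p r (Suc t)"
      if e: "(s, s') \<in> mob" and t: "t < T" and pos: "f j s s' t > 0" for s s' t
    proof -
      have "(\<Sum>r\<in>{1..R}. x r s s' t) > 0"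
      proof (rule ccontr)
        assume "\<not> ?thesis"
        then have "int N * (\<Sum>r\<in>{1..R}. x r s s' t) \<le> 0" by (simp add: mult_nonneg_nonpos)
        with brm1[OF j e t] pos show False by simp
      qed
      then obtain r where r: "r \<in> {1..R}" "x r s s' t > 0" using pos_sum_ex by blast
      have "x r s s' t \<in> {0,1}" using xb[OF r(1) e t] .
      then have "x r s s' t = 1" using r by auto
      then show ?thesis using movestep[OF r(1) e t] r(1) by blast
    qed
    have comstep: "good s' t"
      if g: "good s t" and t: "t \<le> T" and e: "(s, s') \<in> com" and pos: "fb j s s' t > 0" for s s' t
    proof -
      obtain ip where ip: "P t ip" "last (ip t) = s" using g unfolding good_def by blast
      obtain r where r: "r \<in> {1..R}" "s' = p r t" using posC[OF e t pos] by blast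
      have s'S: "s' \<in> S" using e comS by auto
      define ip' where "ip' = ip(t := ip t @ [s'])"
      have ne: "ip t \<noteq> []" using ip(1) unfolding P_def by auto
      have A: "\<forall>t'\<le>t. ip' t' \<noteq> [] \<and> set (ip' t') \<subseteq> S \<and> set (ip' t') \<subseteq> {p r t' |r. r \<in> {1..R}} \<and>
          (\<forall>k. Suc k < length (ip' t') \<longrightarrow> (ip' t' ! k, ip' t' ! Suc k) \<in> com)"
      proof (intro allI impI)
        fix t' assume t': "t' \<le> t"
        show "ip' t' \<noteq> [] \<and> set (ip' t') \<subseteq> S \<and> set (ip' t') \<subseteq> {p r t' |r. r \<in> {1..R}} \<and>
          (\<forall>k. Suc k < length (ip' t') \<longrightarrow> (ip' t' ! k, ip' t' ! Suc k) \<in> com)"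
        proof (cases "t' = t")
          case False
          then show ?thesis using ip(1) t' unfolding P_def ip'_def by auto
        next
          case True
          have old: "ip t \<noteq> [] \<and> set (ip t) \<subseteq> S \<and> set (ip t) \<subseteq> {p r t |r. r \<in> {1..R}} \<and>
            (\<forall>k. Suc k < length (ip t) \<longrightarrow> (ip t ! k, ip t ! Suc k) \<in> com)"
            using ip(1) unfolding P_def by auto
          have steps: "(\<forall>k. Suc k < length (ip t @ [s']) \<longrightarrow> ((ip t @ [s']) ! k, (ip t @ [s']) ! Suc k) \<in> com)"
          proof (intro allI impI)
            fix k assume k: "Suc k < length (ip t @ [s'])"
            show "((ip t @ [s']) ! k, (ip t @ [s']) ! Suc k) \<in> com"
            proof (cases "Suc k < length (ip t)")
              case True
              then show ?thesis using old by (simp add: nth_append)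
            next
              case False
              then have kk: "Suc k = length (ip t)" using k by simp
              then have "k = length (ip t) - 1" by simp
              then have "ip t ! k = last (ip t)" using ne by (simp add: last_conv_nth)
              then show ?thesis using kk ip(2) e by (simp add: nth_append)
            qed
          qed
          show ?thesis using True old steps s'S r unfolding ip'_def by auto
        qed
      qed
      have B: "\<forall>t'<t. (last (ip' t'), hd (ip' (Suc t'))) \<in> mob \<and>
          (last (ip' t'), hd (ip' (Suc t'))) \<in> {(p r t', p r (Suc t')) |r. r \<in> {1..R}}"
      proof (intro allI impI)
        fix t' assume t': "t' < t"
        have "ip' t' = ip t'" using t' unfolding ip'_def by simp
        moreover have "hd (ip' (Suc t')) = hd (ip (Suc t'))"
          using ne unfolding ip'_def by (cases "Suc t' = t") auto
        ultimately show "(last (ip' t'), hd (ip' (Suc t'))) \<in> mob \<and>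
          (last (ip' t'), hd (ip' (Suc t'))) \<in> {(p r t', p r (Suc t')) |r. r \<in> {1..R}}"
          using ip(1) t' unfolding P_def by simp
      qed
      have C: "hd (ip' 0) = p i 0"
        using ip(1) ne unfolding P_def ip'_def by (cases "t = 0") auto
      have "P t ip'" unfolding P_def using A B C by blast
      moreover have "last (ip' t) = s'" unfolding ip'_def by simp
      ultimately show ?thesis unfolding good_def by blast
    qed
    have mobstep: "good s' (Suc t)"
      if g: "good s t" and t: "t < T" and e: "(s, s') \<in> mob" and pos: "f j s s' t > 0" for s s' t
    proof -
      obtain ip where ip: "P t ip" "last (ip t) = s" using g unfolding good_def by blast
      obtain r where r: "r \<in> {1..R}" "s = p r t" "s' = p r (Suc t)" using posM[OF e t pos] by blast
      have s'S: "s' \<in> S" using e mobS by auto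
      define ip' where "ip' = ip(Suc t := [s'])"
      have A: "\<forall>t'\<le>Suc t. ip' t' \<noteq> [] \<and> set (ip' t') \<subseteq> S \<and> set (ip' t') \<subseteq> {p r t' |r. r \<in> {1..R}} \<and>
          (\<forall>k. Suc k < length (ip' t') \<longrightarrow> (ip' t' ! k, ip' t' ! Suc k) \<in> com)"
      proof (intro allI impI)
        fix t' assume t': "t' \<le> Suc t"
        show "ip' t' \<noteq> [] \<and> set (ip' t') \<subseteq> S \<and> set (ip' t') \<subseteq> {p r t' |r. r \<in> {1..R}} \<and>
          (\<forall>k. Suc k < length (ip' t') \<longrightarrow> (ip' t' ! k, ip' t' ! Suc k) \<in> com)"
        proof (cases "t' = Suc t")
          case False
          then have "t' \<le> t" using t' by simp
          then show ?thesis using ip(1) False unfolding P_def ip'_def by auto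
        next
          case True
          then show ?thesis using s'S r unfolding ip'_def by auto
        qed
      qed
      have B: "\<forall>t'<Suc t. (last (ip' t'), hd (ip' (Suc t'))) \<in> mob \<and>
          (last (ip' t'), hd (ip' (Suc t'))) \<in> {(p r t', p r (Suc t')) |r. r \<in> {1..R}}"
      proof (intro allI impI)
        fix t' assume t': "t' < Suc t"
        show "(last (ip' t'), hd (ip' (Suc t'))) \<in> mob \<and>
          (last (ip' t'), hd (ip' (Suc t'))) \<in> {(p r t', p r (Suc t')) |r. r \<in> {1..R}}"
        proof (cases "t' = t")
          case True
          then show ?thesis using ip(2) e r unfolding ip'_def by auto
        next
          case False
          then have "t' < t" using t' by simp
          then show ?thesis using ip(1) unfolding P_def ip'_def by auto
        qed
      qed
      have C: "hd (ip' 0) = p i 0"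
        using ip(1) unfolding P_def ip'_def by auto
      have "P (Suc t) ip'" unfolding P_def using A B C by blast
      moreover have "last (ip' (Suc t)) = s'" unfolding ip'_def by simp
      ultimately show ?thesis unfolding good_def by blast
    qed
    have base: "good (p i 0) 0"
    proof -
      have "P 0 (\<lambda>_. [p i 0])" unfolding P_def using pS[OF iR, of 0] iR by auto
      then show ?thesis unfolding good_def by auto
    qed
    have final: "good (p j T) T"
    proof (rule ccontr)
      assume ng: "\<not> good (p j T) T"
      define a where "a = (\<lambda>s t. if good s t then 1 else (0::int))"
      define F where "F = (\<lambda>s t. Fnet mob com T (f j) (fb j) s t)"
      define g where "g = (\<lambda>t. \<Sum>(u,v)\<in>mob. a v (Suc t) * f j u v t)"
      define h where "h = (\<lambda>t. \<Sum>(u,v)\<in>mob. a u t * f j u v t)"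
      define CD where "CD = (\<lambda>t. \<Sum>(u,v)\<in>com. (a v t - a u t) * fb j u v t)"
      have finmob: "finite mob" using finS mobS by (meson finite_SigmaI finite_subset)
      have fincom: "finite com" using finS comS by (meson finite_SigmaI finite_subset)
      have pw: "(\<Sum>s\<in>S. a s t * F s t) = (if 1 \<le> t then g (t - 1) else 0) + CD t - (if t < T then h t else 0)" for t
      proof -
        have eq1: "(\<Sum>s\<in>S. a s t * (\<Sum>s'\<in>C_minus mob s. f j s' s (t - 1))) = g (t - 1)" if "1 \<le> t"
        proof -
          have "(\<Sum>s\<in>S. a s t * (\<Sum>s'\<in>C_minus mob s. f j s' s (t - 1)))
              = (\<Sum>s\<in>S. \<Sum>s'\<in>C_minus mob s. a s (Suc (t - 1)) * f j s' s (t - 1))"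
            using that by (simp add: sum_distrib_left)
          also have "\<dots> = g (t - 1)" unfolding g_def by (rule sum_edges_minus[OF finS mobS])
          finally show ?thesis .
        qed
        have eq2: "(\<Sum>s\<in>S. a s t * (\<Sum>s'\<in>C_plus mob s. f j s s' t)) = h t"
        proof -
          have "(\<Sum>s\<in>S. a s t * (\<Sum>s'\<in>C_plus mob s. f j s s' t))
              = (\<Sum>s\<in>S. \<Sum>s'\<in>C_plus mob s. a s t * f j s s' t)"
            by (simp add: sum_distrib_left)
          also have "\<dots> = h t" unfolding h_def by (rule sum_edges_plus[OF finS mobS])
          finally show ?thesis .
        qed
        have eq3: "(\<Sum>s\<in>S. a s t * (\<Sum>s'\<in>C_minus com s. fb j s' s t)) = (\<Sum>(u,v)\<in>com. a v t * fb j u v t)"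
        proof -
          have "(\<Sum>s\<in>S. a s t * (\<Sum>s'\<in>C_minus com s. fb j s' s t))
              = (\<Sum>s\<in>S. \<Sum>s'\<in>C_minus com s. a s t * fb j s' s t)"
            by (simp add: sum_distrib_left)
          also have "\<dots> = (\<Sum>(u,v)\<in>com. a v t * fb j u v t)" by (rule sum_edges_minus[OF finS comS])
          finally show ?thesis .
        qed
        have eq4: "(\<Sum>s\<in>S. a s t * (\<Sum>s'\<in>C_plus com s. fb j s s' t)) = (\<Sum>(u,v)\<in>com. a u t * fb j u v t)"
        proof -
          have "(\<Sum>s\<in>S. a s t * (\<Sum>s'\<in>C_plus com s. fb j s s' t))
              = (\<Sum>s\<in>S. \<Sum>s'\<in>C_plus com s. a s t * fb j s s' t)"
            by (simp add: sum_distrib_left)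
          also have "\<dots> = (\<Sum>(u,v)\<in>com. a u t * fb j u v t)" by (rule sum_edges_plus[OF finS comS])
          finally show ?thesis .
        qed
        have cd: "CD t = (\<Sum>(u,v)\<in>com. a v t * fb j u v t) - (\<Sum>(u,v)\<in>com. a u t * fb j u v t)"
          unfolding CD_def by (simp add: sum_subtractf[symmetric] case_prod_beta left_diff_distrib)
        have "(\<Sum>s\<in>S. a s t * F s t) =
            (\<Sum>s\<in>S. a s t * (if 1 \<le> t then (\<Sum>s'\<in>C_minus mob s. f j s' s (t - 1)) else 0))
          + (\<Sum>s\<in>S. a s t * (\<Sum>s'\<in>C_minus com s. fb j s' s t))
          - (\<Sum>s\<in>S. a s t * (if t < T then (\<Sum>s'\<in>C_plus mob s. f j s s' t) else 0))
          - (\<Sum>s\<in>S. a s t * (\<Sum>s'\<in>C_plus com s. fb j s s' t))"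
        proof -
          define X1 where "X1 = (\<lambda>s. a s t * (if 1 \<le> t then (\<Sum>s'\<in>C_minus mob s. f j s' s (t - 1)) else 0))"
          define X2 where "X2 = (\<lambda>s. a s t * (\<Sum>s'\<in>C_minus com s. fb j s' s t))"
          define X3 where "X3 = (\<lambda>s. a s t * (if t < T then (\<Sum>s'\<in>C_plus mob s. f j s s' t) else 0))"
          define X4 where "X4 = (\<lambda>s. a s t * (\<Sum>s'\<in>C_plus com s. fb j s s' t))"
          have "\<And>s. a s t * F s t = X1 s + X2 s - X3 s - X4 s"
            unfolding F_def Fnet_def X1_def X2_def X3_def X4_def by (simp add: algebra_simps)
          then have "(\<Sum>s\<in>S. a s t * F s t) = (\<Sum>s\<in>S. X1 s + X2 s - X3 s - X4 s)" by simp
          also have "\<dots> = sum X1 S + sum X2 S - sum X3 S - sum X4 S"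
            by (simp only: sum_subtractf sum.distrib)
          finally show ?thesis unfolding X1_def X2_def X3_def X4_def .
        qed
        also have "\<dots> = (if 1 \<le> t then g (t - 1) else 0) + CD t - (if t < T then h t else 0)"
          using eq1 eq2 eq3 eq4 cd by simp
        finally show ?thesis .
      qed
      have tot: "(\<Sum>t\<le>T. \<Sum>s\<in>S. a s t * F s t) = (\<Sum>t<T. g t - h t) + (\<Sum>t\<le>T. CD t)"
      proof -
        have "(\<Sum>t\<le>T. \<Sum>s\<in>S. a s t * F s t) = (\<Sum>t\<le>T. (if 1 \<le> t then g (t - 1) else 0))
            + (\<Sum>t\<le>T. CD t) - (\<Sum>t\<le>T. (if t < T then h t else 0))"
          using pw by (simp add: sum.distrib sum_subtractf)
        also have "\<dots> = (\<Sum>t<T. g t) + (\<Sum>t\<le>T. CD t) - (\<Sum>t<T. h t)"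
          using shift_sum[OF T1, of g] cut_sum[of T h] by simp
        finally show ?thesis by (simp add: sum_subtractf)
      qed
      have gh: "g t - h t \<ge> 0" if t: "t < T" for t
      proof -
        have "g t - h t = (\<Sum>(u,v)\<in>mob. (a v (Suc t) - a u t) * f j u v t)"
          unfolding g_def h_def by (simp add: sum_subtractf[symmetric] case_prod_beta left_diff_distrib)
        also have "\<dots> \<ge> 0"
        proof (rule sum_nonneg)
          fix e assume e: "e \<in> mob"
          obtain u v where uv: "e = (u, v)" by (cases e)
          have f0: "f j u v t \<ge> 0" using fn[OF j _ t] e uv by simp
          show "0 \<le> (case e of (u, v) \<Rightarrow> (a v (Suc t) - a u t) * f j u v t)"
          proof (cases "good u t")
            case True
            show ?thesis
            proof (cases "f j u v t > 0")
              case True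
              then have "good v (Suc t)" using mobstep[OF \<open>good u t\<close> t] e uv by simp
              then show ?thesis using \<open>good u t\<close> uv unfolding a_def by simp
            next
              case False
              then have "f j u v t = 0" using f0 by simp
              then show ?thesis using uv by simp
            qed
          next
            case False
            then show ?thesis using uv f0 unfolding a_def by simp
          qed
        qed
        finally show ?thesis .
      qed
      have cdn: "CD t \<ge> 0" if t: "t \<le> T" for t
        unfolding CD_def
      proof (rule sum_nonneg)
        fix e assume e: "e \<in> com"
        obtain u v where uv: "e = (u, v)" by (cases e)
        have f0: "fb j u v t \<ge> 0" using fbn[OF j _ t] e uv by simp
        show "0 \<le> (case e of (u, v) \<Rightarrow> (a v t - a u t) * fb j u v t)"
        proof (cases "good u t")
          case True
          show ?thesis
          proof (cases "fb j u v t > 0")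
            case True
            then have "good v t" using comstep[OF \<open>good u t\<close> t] e uv by simp
            then show ?thesis using \<open>good u t\<close> uv unfolding a_def by simp
          next
            case False
            then have "fb j u v t = 0" using f0 by simp
            then show ?thesis using uv by simp
          qed
        next
          case False
          then show ?thesis using uv f0 unfolding a_def by simp
        qed
      qed
      have low: "(\<Sum>t\<le>T. \<Sum>s\<in>S. a s t * F s t) \<ge> 0"
        unfolding tot using gh cdn by (intro add_nonneg_nonneg sum_nonneg) auto
      have srcfin: "finite src" using srcR finite_subset by blast
      have trm: "a s t * F s t \<le> 0" if s: "s \<in> S" and t: "t \<le> T" for s t
      proof -
        have FF: "F s t = (if t = 0 then - (\<Sum>r\<in>src. z r s 0)
           else if t = T then int (card src) * z j s T else 0)"
          unfolding F_def using flow j s t by blast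
        have a01: "a s t \<ge> 0" unfolding a_def by simp
        show ?thesis
        proof (cases "t = 0")
          case True
          have "(\<Sum>r\<in>src. z r s 0) \<ge> 0"
            using zb srcR s by (intro sum_nonneg) force
          then show ?thesis using FF True a01 by (simp add: mult_nonneg_nonpos)
        next
          case False
          show ?thesis
          proof (cases "t = T")
            case True
            show ?thesis
            proof (cases "s = p j T")
              case True
              then have "a s t = 0" using ng \<open>t = T\<close> unfolding a_def by simp
              then show ?thesis by simp
            next
              case False
              have "z j s T \<noteq> 1" using pu[OF jR _ s] False by auto
              moreover have "z j s T \<in> {0,1}" using zb[OF jR s] by simp
              ultimately have "z j s T = 0" by auto
              then show ?thesis using FF \<open>t = T\<close> T1 by simp
            qed
          next
            case False
            then show ?thesis using FF \<open>t \<noteq> 0\<close> by simp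
          qed
        qed
      qed
      have pi0: "p i 0 \<in> S" "z i (p i 0) 0 = 1" using pS[OF iR] by auto
      have trm0: "a (p i 0) 0 * F (p i 0) 0 \<le> -1"
      proof -
        have FF: "F (p i 0) 0 = - (\<Sum>r\<in>src. z r (p i 0) 0)"
          unfolding F_def using flow j pi0(1) by simp
        have "z i (p i 0) 0 \<le> (\<Sum>r\<in>src. z r (p i 0) 0)"
          using i srcfin zb srcR pi0(1) by (intro member_le_sum) force+
        then have "F (p i 0) 0 \<le> -1" using FF pi0(2) by simp
        moreover have "a (p i 0) 0 = 1" using base unfolding a_def by simp
        ultimately show ?thesis by simp
      qed
      have "(\<Sum>t\<le>T. \<Sum>s\<in>S. a s t * F s t) \<le> (\<Sum>s\<in>S. a s 0 * F s 0)"
        using trm finS by (intro sum_le_member) (auto intro: sum_nonpos)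
      also have "\<dots> \<le> a (p i 0) 0 * F (p i 0) 0"
        using trm finS pi0(1) by (intro sum_le_member) auto
      finally show False using low trm0 by simp
    qed
    then obtain ip where ip: "P T ip" "last (ip T) = p j T" unfolding good_def by blast
    have "agent_info_path S mob com T p i j ip"
      using ip unfolding agent_info_path_def info_path_def P_def by auto
    moreover have "valid_info_path R T p ip"
      using ip unfolding valid_info_path_def P_def by auto
    ultimately show ?thesis by blast
  qed
  show ?thesis using uniq mp part3 unfolding p_def by blast
qed

end
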